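(* Let $p>3$ be a prime and let $$F(p-1,p-1)=\frac{18p-15}{4^{4p-4}}\binom{6p-6}{3p-3}\binom{3p-3}{p-1}.$$ Then $F(p-1,p-1)\equiv 15p^2\big(-1-6p+8pq_p(2)\big)\pmod{p^4}$.
   Context: $q_p(2)=(2^{p-1}-1)/p$ is the Fermat quotient. (This is the value at $n=k=p-1$ of $F(n,k)=(-1)^{n+k}\frac{20n-2k+3}{4^{5n-k}}\frac{\binom{2n}{n}\binom{4n+2k}{2n+k}\binom{2n-k}{n}\binom{2n+k}{2k}}{\binom{2k}{k}}$.) Congruences between rationals modulo $p^m$ mean the difference is $p^m$ times a rational with denominator prime to $p$. *)

theory Defs
  imports Complex_Main "HOL-Computational_Algebra.Primes"
begin

definition rat_cong :: "rat \<Rightarrow> rat \<Rightarrow> int \<Rightarrow> bool" where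
  "rat_cong a b m \<longleftrightarrow> (\<exists>r::rat. a - b = of_int m * r \<and> coprime (snd (quotient_of r)) m)"

definition fermat_quotient2 :: "nat \<Rightarrow> rat" where
  "fermat_quotient2 p = (2 ^ (p - 1) - 1) / of_nat p"

end

theory Submission
  imports Defs "HOL-Number_Theory.Number_Theory"
begin

lemma fact_add_prod: "(fact (m + k) :: int) = fact m * (\<Prod>i\<in>{1..k}. int (m + i))"
proof (induction k)
  case 0 then show ?case by simp
next
  case (Suc k)
  have "{1..Suc k} = insert (Suc k) {1..k}" by auto
  then show ?case using Suc by (simp add: algebra_simps)
qed

lemma pair_prod:
  fixes f :: "nat \<Rightarrow> int"
  shows "(\<Prod>i\<in>{1..2*h}. f i) = (\<Prod>i\<in>{1..h}. f i * f (2*h+1-i))"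
proof -
  have U: "{1..2*h} = {1..h} \<union> (\<lambda>i. 2*h+1-i) ` {1..h}"
  proof -
    have "x \<in> {1..h} \<union> (\<lambda>i. 2*h+1-i) ` {1..h}" if x: "x \<in> {1..2*h}" for x
    proof (cases "x \<le> h")
      case True then show ?thesis using x by auto
    next
      case False
      then have "x = 2*h+1-(2*h+1-x)" "2*h+1-x \<in> {1..h}" using x by auto
      then show ?thesis by blast
    qed
    then show ?thesis by (intro subset_antisym) (blast, auto)
  qed
  have D: "{1..h} \<inter> (\<lambda>i. 2*h+1-i) ` {1..h} = {}" by auto
  have I: "inj_on (\<lambda>i. 2*h+1-i) {1..h}" by (auto simp: inj_on_def)
  have "(\<Prod>i\<in>{1..2*h}. f i) = (\<Prod>i\<in>{1..h}. f i) * (\<Prod>i\<in>(\<lambda>i. 2*h+1-i) ` {1..h}. f i)"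
    unfolding U by (rule prod.union_disjoint) (use D in auto)
  also have "(\<Prod>i\<in>(\<lambda>i. 2*h+1-i) ` {1..h}. f i) = (\<Prod>i\<in>{1..h}. f (2*h+1-i))"
    using prod.reindex[OF I] by simp
  finally show ?thesis by (simp add: prod.distrib)
qed

lemma V_cong:
  assumes "odd p"
  shows "[(\<Prod>i\<in>{1..p-1}. int (j*p+i)) = fact (p-1)] (mod (int p)^2)"
proof -
  obtain h where h: "p = 2*h+1" using assms oddE by blast
  have F: "(fact (p-1) :: int) = (\<Prod>i\<in>{1..p-1}. int (0*p+i))"
    using fact_add_prod[of 0 "p-1"] by simp
  have "[(\<Prod>i\<in>{1..h}. int (j*p+i) * int (j*p+(2*h+1-i)))
        = (\<Prod>i\<in>{1..h}. int (0*p+i) * int (0*p+(2*h+1-i)))] (mod (int p)^2)"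
  proof (rule cong_prod)
    fix i assume i: "i \<in> {1..h}"
    have "int (j*p+i) * int (j*p+(2*h+1-i)) - int (0*p+i) * int (0*p+(2*h+1-i))
          = (int p)^2 * (int j^2 + int j)"
      using i h by (simp add: of_nat_diff power2_eq_square algebra_simps)
    then show "[int (j*p+i) * int (j*p+(2*h+1-i)) = int (0*p+i) * int (0*p+(2*h+1-i))] (mod (int p)^2)"
      by (simp add: cong_iff_dvd_diff)
  qed
  moreover have "\<And>j. (\<Prod>i\<in>{1..p-1}. int (j*p+i)) = (\<Prod>i\<in>{1..h}. int (j*p+i) * int (j*p+(2*h+1-i)))"
  proof -
    fix j
    show "(\<Prod>i\<in>{1..p-1}. int (j*p+i)) = (\<Prod>i\<in>{1..h}. int (j*p+i) * int (j*p+(2*h+1-i)))"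
      using pair_prod[of "\<lambda>i. int (j*p+i)" h] h by simp
  qed
  ultimately show ?thesis using F by metis
qed

lemma fact_mult_p:
  assumes "p > 0"
  shows "(fact (p*n) :: int) = int p ^ n * fact n * (\<Prod>j<n. \<Prod>i\<in>{1..p-1}. int (j*p+i))"
proof (induction n)
  case 0 then show ?case by simp
next
  case (Suc n)
  show ?case
  proof -
    have False: "p \<noteq> 0" using assms by simp
    have S: "{1..p} = insert p {1..p-1}" using False by auto
    have "(fact (p*Suc n) :: int) = fact (p*n + p)" by (simp add: algebra_simps)
    also have "\<dots> = fact (p*n) * (\<Prod>i\<in>{1..p}. int (p*n+i))" by (rule fact_add_prod)
    also have "(\<Prod>i\<in>{1..p}. int (p*n+i)) = int (p*n+p) * (\<Prod>i\<in>{1..p-1}. int (n*p+i))"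
      unfolding S using False by (subst prod.insert) (auto simp: algebra_simps)
    finally show ?thesis using Suc by (simp add: algebra_simps)
  qed
qed

lemma denom_dvd:
  assumes "b > 0"
  shows "snd (quotient_of (of_int a / of_int b :: rat)) dvd b"
proof -
  obtain n d where q: "quotient_of (of_int a / of_int b :: rat) = (n, d)" by (cases "quotient_of (of_int a / of_int b :: rat)")
  have d0: "d > 0" using quotient_of_denom_pos[OF q] .
  have cp: "coprime n d" using quotient_of_coprime[OF q] .
  have "(of_int a / of_int b :: rat) = of_int n / of_int d" using quotient_of_div[OF q] .
  then have "of_int (a * d) = (of_int (n * b) :: rat)" using d0 assms
    by (simp add: field_simps)
  then have "a * d = n * b" by (simp only: of_int_eq_iff)
  then have "d dvd n * b" by (metis dvd_triv_right)
  then have "d dvd b" using cp by (simp add: coprime_commute coprime_dvd_mult_right_iff)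
  then show ?thesis using q by simp
qed

lemma U_cong:
  assumes "odd p"
  shows "[(\<Prod>j<n. \<Prod>i\<in>{1..p-1}. int (j*p+i)) = fact (p-1) ^ n] (mod (int p)^2)"
proof -
  have "[(\<Prod>j<n. \<Prod>i\<in>{1..p-1}. int (j*p+i)) = (\<Prod>j<n. fact (p-1))] (mod (int p)^2)"
    by (rule cong_prod) (rule V_cong[OF assms])
  then show ?thesis by simp
qed

lemma core:
  fixes p :: nat
  assumes pr: "prime p" and p3: "p > 3"
  defines "P \<equiv> int p"
  defines "X \<equiv> int ((6 * p - 6) choose (3 * p - 3)) * int ((3 * p - 3) choose (p - 1))"
  defines "t \<equiv> (2::int) ^ (p - 1)"
  shows "P^4 dvd (18*P - 15) * X - t^8 * (15 * P^2 * (8*t - 9 - 6*P))"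
proof -
  have odd: "odd p" using prime_odd_nat[OF pr] p3 by simp
  define U where "U n = (\<Prod>j<n. \<Prod>i\<in>{1..p-1}. int (j*p+i))" for n
  define c where "c = (fact (p-1) :: int)"
  have Uc: "[U n = c ^ n] (mod P^2)" for n unfolding U_def c_def P_def by (rule U_cong[OF odd])
  have FU: "(fact (p*n) :: int) = P ^ n * fact n * U n" for n
    unfolding U_def P_def by (rule fact_mult_p) (use p3 in simp)
  have f6: "(fact 6 :: int) = 720" "(fact 3 :: int) = 6" "(fact 2 :: int) = 2" "(fact 1 :: int) = 1"
    by (simp_all add: numeral_eq_Suc)
  have e6: "(fact (m + 6) :: int) = fact m * (int m+1)*(int m+2)*(int m+3)*(int m+4)*(int m+5)*(int m+6)" for m
    by (simp add: numeral_eq_Suc algebra_simps)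
  have e3: "(fact (m + 3) :: int) = fact m * (int m+1)*(int m+2)*(int m+3)" for m
    by (simp add: numeral_eq_Suc algebra_simps)
  have e2: "(fact (m + 2) :: int) = fact m * (int m+1)*(int m+2)" for m
    by (simp add: numeral_eq_Suc algebra_simps)
  have e1: "(fact (m + 1) :: int) = fact m * (int m+1)" for m
    by (simp add: algebra_simps)
  define F6 where "F6 = (fact (6*p-6) :: int)"
  define F3 where "F3 = (fact (3*p-3) :: int)"
  define F2 where "F2 = (fact (2*p-2) :: int)"
  define F1 where "F1 = (fact (p-1) :: int)"
  have b: "F6 * ((6*P-5)*(6*P-4)*(6*P-3)*(6*P-2)*(6*P-1)*(6*P)) = P^6*720*U 6"
  proof -
    have q: "p*6 = (6*p-6)+6" using p3 by simp
    have h: "(fact (p*6)::int) = F6*(int(6*p-6)+1)*(int(6*p-6)+2)*(int(6*p-6)+3)*(int(6*p-6)+4)*(int(6*p-6)+5)*(int(6*p-6)+6)"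
      unfolding F6_def q by (rule e6)
    have i: "int(6*p-6) = 6*P-6" using p3 unfolding P_def by simp
    have "F6 * ((6*P-5)*(6*P-4)*(6*P-3)*(6*P-2)*(6*P-1)*(6*P)) = fact (p*6)" unfolding h i by (simp add: algebra_simps)
    then show ?thesis using FU[of 6] f6 by simp
  qed
  have c3: "F3 * ((3*P-2)*(3*P-1)*(3*P)) = P^3*6*U 3"
  proof -
    have q: "p*3 = (3*p-3)+3" using p3 by simp
    have h: "(fact (p*3)::int) = F3*(int(3*p-3)+1)*(int(3*p-3)+2)*(int(3*p-3)+3)"
      unfolding F3_def q by (rule e3)
    have i: "int(3*p-3) = 3*P-3" using p3 unfolding P_def by simp
    have "F3 * ((3*P-2)*(3*P-1)*(3*P)) = fact (p*3)" unfolding h i by (simp add: algebra_simps)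
    then show ?thesis using FU[of 3] f6 by simp
  qed
  have e: "F2 * ((2*P-1)*(2*P)) = P^2*2*U 2"
  proof -
    have q: "p*2 = (2*p-2)+2" using p3 by simp
    have h: "(fact (p*2)::int) = F2*(int(2*p-2)+1)*(int(2*p-2)+2)"
      unfolding F2_def q by (rule e2)
    have i: "int(2*p-2) = 2*P-2" using p3 unfolding P_def by simp
    have "F2 * ((2*P-1)*(2*P)) = fact (p*2)" unfolding h i by (simp add: algebra_simps)
    then show ?thesis using FU[of 2] f6 by simp
  qed
  have d: "F1 = U 1"
  proof -
    have q: "p*1 = (p-1)+1" using p3 by simp
    have h: "(fact (p*1)::int) = F1*(int(p-1)+1)"
      unfolding F1_def q by (rule e1)
    have i: "int(p-1) = P-1" using p3 unfolding P_def by simp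
    have "F1 * P = fact (p*1)" unfolding h i by (simp add: algebra_simps)
    then have "F1 * P = U 1 * P" using FU[of 1] f6 by simp
    then show ?thesis using p3 unfolding P_def by simp
  qed
  have a: "X * F3 * F1 * F2 = F6"
  proof -
    have g1: "fact (3*p-3) * fact ((6*p-6) - (3*p-3)) * ((6*p-6) choose (3*p-3)) = fact (6*p-6)"
      by (rule binomial_fact_lemma) simp
    have g2: "fact (p-1) * fact ((3*p-3) - (p-1)) * ((3*p-3) choose (p-1)) = fact (3*p-3)"
      by (rule binomial_fact_lemma) simp
    have g3: "(6*p-6) - (3*p-3) = 3*p-3" "(3*p-3) - (p-1) = 2*p-2" by simp_all
    have h1: "F3 * F3 * int ((6*p-6) choose (3*p-3)) = F6"
      using arg_cong[OF g1, of int] unfolding g3 F3_def F6_def by (simp only: of_nat_mult of_nat_fact)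
    have h2: "F1 * F2 * int ((3*p-3) choose (p-1)) = F3"
      using arg_cong[OF g2, of int] unfolding g3 F3_def F2_def F1_def by (simp only: of_nat_mult of_nat_fact)
    show ?thesis unfolding X_def using h1 h2 by (metis mult.commute mult.left_commute)
  qed
  define A6 where "A6 = (6*P-5)*(6*P-4)*(6*P-3)*(6*P-2)*(6*P-1)*(6*P)"
  define B3 where "B3 = (3*P-2)*(3*P-1)*(3*P)"
  define B2 where "B2 = (2*P-1)*(2*P)"
  define Kk where "Kk = 12*P^5*((6*P-4)*(6*P-3)*(6*P-2)*(6*P))"
  have P5: "P \<ge> 5"
  proof -
    have "p \<ge> 5" using p3 odd by presburger
    then show ?thesis unfolding P_def by simp
  qed
  have "X*(6*P-1)*(6*P-5)*U 3*U 1*U 2*Kk = X*(P^3*6*U 3)*U 1*(P^2*2*U 2)*A6"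
    unfolding Kk_def A6_def by (simp add: algebra_simps)
  also have "\<dots> = (X*F3*F1*F2)*A6*B3*B2"
    unfolding c3[symmetric] e[symmetric] d B3_def B2_def by (simp add: algebra_simps)
  also have "\<dots> = (F6*A6)*B3*B2" unfolding a ..
  also have "\<dots> = P^6*720*U 6*B3*B2" using b unfolding A6_def by simp
  also have "\<dots> = 5*P^2*U 6*Kk" unfolding Kk_def B3_def B2_def by (simp add: algebra_simps eval_nat_numeral)
  finally have "X*(6*P-1)*(6*P-5)*U 3*U 1*U 2*Kk = 5*P^2*U 6*Kk" .
  moreover have "Kk \<noteq> 0" unfolding Kk_def using P5 by simp
  ultimately have key: "X*(6*P-1)*(6*P-5)*U 3*U 1*U 2 = 5*P^2*U 6" by simp
  define E where "E = t^8*(6*P-1)*(8*t-9-6*P)"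
  define N where "N = (18*P - 15) * X - t^8 * (15 * P^2 * (8*t - 9 - 6*P))"
  define Kc where "Kc = (6*P-1)*(U 3*U 1*U 2)"
  have "Kc*N = 3*(X*(6*P-1)*(6*P-5)*U 3*U 1*U 2) - 15*P^2*(E*(U 3*U 1*U 2))"
    unfolding Kc_def N_def E_def by (simp add: algebra_simps)
  also have "\<dots> = 15*P^2*(U 6 - E*(U 3*U 1*U 2))" unfolding key by (simp add: algebra_simps)
  finally have KN: "Kc*N = 15*P^2*(U 6 - E*(U 3*U 1*U 2))" .
  have "[2^(p-1) = 1] (mod p)"
    by (rule fermat_theorem[OF pr]) (use p3 in \<open>auto dest: dvd_imp_le\<close>)
  then have "[t = 1] (mod P)" unfolding t_def P_def by (metis cong_int_iff of_nat_1 of_nat_numeral of_nat_power)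
  then obtain q where tq: "t = 1 + P*q" by (metis cong_iff_lin cong_sym)
  have "E - 1 = P^2 * (q*q*(28+56*(P*q)+70*(P*q)^2+56*(P*q)^3+28*(P*q)^4+8*(P*q)^5+(P*q)^6)*(6*P-1)*(8*P*q-1-6*P)-64*q*q+48*q-36+8*P*q*(48*q-36))"
    unfolding E_def tq by (simp add: algebra_simps eval_nat_numeral)
  then have E1: "[E = 1] (mod P^2)" by (simp add: cong_iff_dvd_diff)
  have U3c: "[U 3*U 1*U 2 = c^3*c^1*c^2] (mod P^2)" by (intro cong_mult Uc)
  have "[E*(U 3*U 1*U 2) = 1*(c^3*c^1*c^2)] (mod P^2)" by (rule cong_mult[OF E1 U3c])
  moreover have "(1::int)*(c^3*c^1*c^2) = c^6" by (simp add: eval_nat_numeral)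
  ultimately have "[E*(U 3*U 1*U 2) = c^6] (mod P^2)" by simp
  then have "[U 6 = E*(U 3*U 1*U 2)] (mod P^2)" using Uc[of 6] by (metis cong_sym cong_trans)
  then obtain k where "U 6 - E*(U 3*U 1*U 2) = P^2*k" by (metis cong_iff_dvd_diff dvdE)
  then have "Kc*N = P^4 * (15*k)" unfolding KN by (simp add: algebra_simps power_add[symmetric])
  then have dv: "P^4 dvd Kc*N" by simp
  have primeP: "prime P" using pr unfolding P_def by simp
  have "\<not> p dvd fact (p-1)" using pr p3 by (simp add: prime_dvd_fact_iff)
  then have "\<not> P dvd c" unfolding P_def c_def by (metis of_nat_dvd_iff of_nat_fact)
  then have cP: "coprime c P" using primeP by (simp add: prime_imp_coprime coprime_commute)
  have cU: "coprime (U n) P" for n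
  proof -
    have "coprime (c^n) (P^2)" using cP by simp
    then have "coprime (U n) (P^2)" using cong_imp_coprime[OF cong_sym[OF Uc[of n]]] by blast
    then show ?thesis by simp
  qed
  have c6: "coprime (6*P-1) P"
  proof (rule coprimeI)
    fix d assume "d dvd 6*P-1" "d dvd P"
    then have "d dvd 6*P - (6*P-1)" by (metis dvd_diff dvd_mult)
    then show "is_unit d" by simp
  qed
  have "coprime Kc P" unfolding Kc_def using c6 cU by simp
  then have "coprime (P^4) Kc" by (simp add: coprime_commute)
  then have "P^4 dvd N" using dv coprime_dvd_mult_right_iff by blast
  then show ?thesis unfolding N_def .
qed

theorem lemma3p1:
  fixes p :: nat
  assumes "prime p" and "p > 3"
  shows "rat_cong
     ((18 * of_nat p - 15) / 4 ^ (4 * p - 4)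
        * of_nat ((6 * p - 6) choose (3 * p - 3)) * of_nat ((3 * p - 3) choose (p - 1)))
     (15 * (of_nat p)^2 * (-1 - 6 * of_nat p + 8 * of_nat p * fermat_quotient2 p))
     (int p ^ 4)"
proof -
  define P where "P = int p"
  define X where "X = int ((6 * p - 6) choose (3 * p - 3)) * int ((3 * p - 3) choose (p - 1))"
  define t where "t = (2::int) ^ (p - 1)"
  define N where "N = (18*P - 15) * X - t^8 * (15 * P^2 * (8*t - 9 - 6*P))"
  have "P^4 dvd N" unfolding N_def P_def X_def t_def by (rule core[OF assms])
  then obtain k where k: "N = P^4 * k" by (elim dvdE)
  have t0: "t^8 > 0" unfolding t_def by simp
  have e4: "4*p-4 = 4*(p-1)" by simp
  have e8: "2*(4*(p-1)) = (p-1)*8" by simp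
  have "(4::int) ^ (4 * p - 4) = (2^2) ^ (4 * (p - 1))" unfolding e4 by simp
  also have "\<dots> = t^8" unfolding t_def by (simp only: power_mult[symmetric] e8)
  finally have four: "(4::rat) ^ (4 * p - 4) = of_int (t^8)" by (metis of_int_numeral of_int_power)
  have L: "(18 * of_nat p - 15) / 4 ^ (4 * p - 4)
        * of_nat ((6 * p - 6) choose (3 * p - 3)) * of_nat ((3 * p - 3) choose (p - 1))
        = (of_int ((18*P - 15) * X) / of_int (t^8) :: rat)"
    unfolding four X_def P_def by simp
  have pq: "(of_nat p :: rat) * fermat_quotient2 p = of_int (t - 1)"
    unfolding fermat_quotient2_def t_def using assms by simp
  have R: "(15 * (of_nat p)^2 * (-1 - 6 * of_nat p + 8 * of_nat p * fermat_quotient2 p) :: rat)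
     = of_int (15 * P^2 * (8*t - 9 - 6*P))"
  proof -
    have "(15 * (of_nat p)^2 * (-1 - 6 * of_nat p + 8 * of_nat p * fermat_quotient2 p) :: rat)
       = 15 * (of_nat p)^2 * (-1 - 6 * of_nat p + 8 * (of_nat p * fermat_quotient2 p))" by simp
    also have "\<dots> = of_int (15 * P^2 * (8*t - 9 - 6*P))" unfolding pq P_def by simp
    finally show ?thesis .
  qed
  define r where "r = (of_int k / of_int (t^8) :: rat)"
  have diff: "(of_int ((18*P - 15) * X) / of_int (t^8) :: rat) - of_int (15 * P^2 * (8*t - 9 - 6*P))
      = of_int (int p ^ 4) * r"
  proof -
    have "(of_int ((18*P - 15) * X) / of_int (t^8) :: rat) - of_int (15 * P^2 * (8*t - 9 - 6*P))
        = of_int N / of_int (t^8)" unfolding N_def using t0 by (simp add: field_simps)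
    also have "\<dots> = of_int (int p ^ 4) * r" unfolding k r_def P_def by simp
    finally show ?thesis .
  qed
  have primeP: "prime P" using assms unfolding P_def by simp
  have "\<not> P dvd 2"
  proof
    assume "P dvd 2"
    then have "P \<le> 2" by (simp add: zdvd_imp_le)
    then show False using assms unfolding P_def by simp
  qed
  then have "coprime P 2" using prime_imp_coprime[OF primeP] by blast
  then have "coprime (t^8) (P^4)" unfolding t_def by (simp add: coprime_commute)
  moreover have "snd (quotient_of r) dvd t^8" unfolding r_def by (rule denom_dvd[OF t0])
  ultimately have "coprime (snd (quotient_of r)) (int p ^ 4)" unfolding P_def
    by (metis coprime_divisors dvd_refl)
  then show ?thesis unfolding rat_cong_def L R using diff by blast
qed

end
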